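(* Let $q$ be a prime power, let $n_1,n_2,m\ge1$ and $k_1,k_2$ be integers such that for $i=1,2$, $k_i^m\equiv 1\pmod{n_i}$ and $k_i^t\not\equiv 1\pmod{n_i}$ for $1\le t\le m-1$, and let $$G_2=(C_{n_1}\times C_{n_2})\rtimes C_m=\langle x,y,z\mid x^{n_1}=y^{n_2}=z^m=1,\ xy=yx,\ z^{-1}xz=x^{k_1},\ z^{-1}yz=y^{k_2}\rangle .$$ Order the $n_1n_2m$ elements of $G_2$ so that $z^iy^jx^k$ ($0\le k\le n_1-1$, $0\le j\le n_2-1$, $0\le i\le m-1$) is in position $1+k+n_1j+n_1n_2i$, and identify $\mathbb{F}_qG_2$ with $\mathbb{F}_q^{n_1n_2m}$ via $\Psi$ with respect to this ordering. Let $v\in\mathbb{F}_qG_2$ and let $C(v)$ be the code generated by the rows of $\sigma_{G_2}(v)$. Suppose $(b_1,\dots,b_{n_1n_2m})\in C(v)$. For $0\le i\le m-1$ and $0\le j\le n_2-1$ define $$\mathbf{b}_{j+1}'^{(i+1)}=(b_{in_1n_2+jn_1+1},b_{in_1n_2+jn_1+2},\dots,b_{in_1n_2+(j+1)n_1}),\qquad \mathbf{b}_{j+1}^{(i+1)}=T_{n_1}^{[k_1^i]_{n_1}}\big(\mathbf{b}_{j+1}'^{(i+1)}\big),$$ $$\widetilde{\mathbf{b}_{i+1}}=(\mathbf{b}_1^{(i+1)},\dots,\mathbf{b}_{n_2}^{(i+1)}),\qquad \widetilde{\mathbf{b}_{i+1}'}=T_{n_2}^{[k_2^i]_{n_2}}\big(\mathbf{b}_1'^{(i+1)},\dots,\mathbf{b}_{n_2}'^{(i+1)}\big),$$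 $$\widetilde{\mathbf{b}_{i+1}''}=(b_{1+n_1n_2i},b_{2+n_1n_2i},\dots,b_{n_1n_2(i+1)}),$$ where $T_{n_2}$ acts on the $n_2$-tuple of blocks. Then the concatenations $(\widetilde{\mathbf{b}_1},\dots,\widetilde{\mathbf{b}_m})$, $(\widetilde{\mathbf{b}_1'},\dots,\widetilde{\mathbf{b}_m'})$ and $T_m(\widetilde{\mathbf{b}_1''},\dots,\widetilde{\mathbf{b}_m''})$ are also codewords of $C(v)$.
   Context: For a finite group $G=\{g_1,\dots,g_N\}$ with a fixed ordering, $\mathbb{F}_qG$ is the group ring, and $\Psi:\mathbb{F}_qG\to\mathbb{F}_q^N$ sends $v=\sum_{i}\alpha_{g_i}g_i$ to $(\alpha_{g_1},\dots,\alpha_{g_N})$. The group ring matrix $\sigma_G(v)$ is the $N\times N$ matrix whose $(i,j)$ entry is $\alpha_{g_i^{-1}g_j}$; $C(v)$ denotes the row space of $\sigma_G(v)$. For a tuple $(c_1,\dots,c_r)$ (of scalars or of vectors), $T_r(c_1,\dots,c_r)=(c_r,c_1,\dots,c_{r-1})$ is the cyclic shift, and $T_r^s$ is its $s$-th iterate. For integers $a$ and $n\ge1$, $[a]_n$ denotes the smallest positive integer $a'$ with $a\equiv a'\pmod n$. *)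

theory Defs
  imports "HOL-Algebra.Group" "HOL-Number_Theory.Cong"
begin

text \<open>Elements z^i y^j x^k of G_2 = (C_n1 x C_n2) \<rtimes> C_m are represented by
  triples (i,j,k) with 0 \<le> i < m, 0 \<le> j < n2, 0 \<le> k < n1.  Using the relations
  x z = z x^k1 and y z = z y^k2 one gets
  (z^i y^j x^k)(z^i' y^j' x^k') = z^(i+i') y^(j k2^i' + j') x^(k k1^i' + k').\<close>

definition G2_mult :: "nat \<Rightarrow> nat \<Rightarrow> nat \<Rightarrow> int \<Rightarrow> int \<Rightarrow> int \<times> int \<times> int \<Rightarrow> int \<times> int \<times> int \<Rightarrow> int \<times> int \<times> int" where
  "G2_mult n1 n2 m k1 k2 a b = (case a of (i, j, k) \<Rightarrow> case b of (i', j', k') \<Rightarrow>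
     ((i + i') mod int m, (j * k2 ^ nat i' + j') mod int n2, (k * k1 ^ nat i' + k') mod int n1))"

definition G2_carrier :: "nat \<Rightarrow> nat \<Rightarrow> nat \<Rightarrow> (int \<times> int \<times> int) set" where
  "G2_carrier n1 n2 m = {(i, j, k). 0 \<le> i \<and> i < int m \<and> 0 \<le> j \<and> j < int n2 \<and> 0 \<le> k \<and> k < int n1}"

definition G2 :: "nat \<Rightarrow> nat \<Rightarrow> nat \<Rightarrow> int \<Rightarrow> int \<Rightarrow> (int \<times> int \<times> int) monoid" where
  "G2 n1 n2 m k1 k2 = \<lparr>carrier = G2_carrier n1 n2 m, monoid.mult = G2_mult n1 n2 m k1 k2, one = (0, 0, 0)\<rparr>"

text \<open>The fixed ordering: the element z^i y^j x^k is at (0-based) position k + n1 j + n1 n2 i.\<close>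
definition G2_elem :: "nat \<Rightarrow> nat \<Rightarrow> nat \<Rightarrow> int \<times> int \<times> int" where
  "G2_elem n1 n2 p = (int (p div (n1 * n2)), int ((p div n1) mod n2), int (p mod n1))"

text \<open>Group ring matrix sigma_G(v): entry (r,c) is alpha(g_r^{-1} g_c); v is given by
  its coefficient function alpha, g enumerates the group (0-based), N = |G|.\<close>
definition grm :: "('g, 'b) monoid_scheme \<Rightarrow> (nat \<Rightarrow> 'g) \<Rightarrow> ('g \<Rightarrow> 'a) \<Rightarrow> nat \<Rightarrow> nat \<Rightarrow> 'a" where
  "grm G g alpha r c = alpha (inv\<^bsub>G\<^esub> (g r) \<otimes>\<^bsub>G\<^esub> g c)"

definition code :: "('g, 'b) monoid_scheme \<Rightarrow> (nat \<Rightarrow> 'g) \<Rightarrow> nat \<Rightarrow> ('g \<Rightarrow> 'a::field) \<Rightarrow> 'a list set" where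
  "code G g N alpha = {map (\<lambda>c. \<Sum>r<N. lam r * grm G g alpha r c) [0..<N] | lam. True}"

definition T :: "'x list \<Rightarrow> 'x list" where
  "T xs = (if xs = [] then [] else last xs # butlast xs)"

definition Tpow :: "nat \<Rightarrow> 'x list \<Rightarrow> 'x list" where
  "Tpow s = T ^^ s"

definition posmod :: "int \<Rightarrow> nat \<Rightarrow> nat" where
  "posmod a n = (LEAST a'. a' > 0 \<and> [a = int a'] (mod int n))"

end

theory Submission
  imports Defs
begin

lemma pow_mod_cong:
  fixes k :: int
  assumes "[k ^ m = 1] (mod n)"
  shows "[k ^ (a mod m) = k ^ a] (mod n)"
proof -
  have "k ^ a = k ^ (m * (a div m) + a mod m)" by simp
  also have "\<dots> = (k ^ m) ^ (a div m) * k ^ (a mod m)" by (simp only: power_add power_mult)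
  finally have e: "k ^ a = (k ^ m) ^ (a div m) * k ^ (a mod m)" .
  have "[(k ^ m) ^ (a div m) * k ^ (a mod m) = 1 ^ (a div m) * k ^ (a mod m)] (mod n)"
    by (intro cong_mult cong_pow assms cong_refl)
  then have "[k ^ a = k ^ (a mod m)] (mod n)" unfolding e by simp
  then show ?thesis by (rule cong_sym)
qed

lemma pow_mod_eq:
  fixes k :: int
  assumes "[k ^ m = 1] (mod n)"
  shows "(k ^ (a mod m)) mod n = (k ^ a) mod n"
  using pow_mod_cong[OF assms] unfolding cong_def .

lemma modK:
  fixes K K' j X n :: int
  assumes "K mod n = K' mod n"
  shows "(j * K + X) mod n = (j * K' + X) mod n"
proof -
  have "[j * K + X = j * K' + X] (mod n)"
    using assms unfolding cong_def[symmetric] by (intro cong_add cong_mult cong_refl)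
  then show ?thesis unfolding cong_def .
qed

lemma G2_assoc_comp:
  fixes j j' j'' :: int and i' i'' :: int and k :: int
  assumes "[k ^ m = 1] (mod int n)" "0 \<le> i'" "0 \<le> i''"
  shows "(((j * k ^ nat i' + j') mod int n) * k ^ nat i'' + j'') mod int n
       = (j * k ^ nat ((i' + i'') mod int m) + (j' * k ^ nat i'' + j'') mod int n) mod int n"
proof -
  have e: "nat ((i' + i'') mod int m) = (nat i' + nat i'') mod m"
    using assms by (simp add: nat_mod_distrib nat_add_distrib)
  have K: "(k ^ nat ((i' + i'') mod int m)) mod int n = (k ^ nat i' * k ^ nat i'') mod int n"
    unfolding e pow_mod_eq[OF assms(1)] by (simp add: power_add)
  have "(j * k ^ nat ((i' + i'') mod int m) + (j' * k ^ nat i'' + j'') mod int n) mod int n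
      = (j * k ^ nat ((i' + i'') mod int m) + (j' * k ^ nat i'' + j'')) mod int n"
    by (simp add: mod_add_right_eq)
  also have "\<dots> = (j * (k ^ nat i' * k ^ nat i'') + (j' * k ^ nat i'' + j'')) mod int n"
    by (rule modK[OF K])
  finally have R: "(j * k ^ nat ((i' + i'') mod int m) + (j' * k ^ nat i'' + j'') mod int n) mod int n
      = (j * (k ^ nat i' * k ^ nat i'') + (j' * k ^ nat i'' + j'')) mod int n" .
  have L: "(((j * k ^ nat i' + j') mod int n) * k ^ nat i'' + j'') mod int n
      = ((j * k ^ nat i' + j') * k ^ nat i'' + j'') mod int n"
    by (metis mod_add_left_eq mod_mult_left_eq)
  show ?thesis unfolding R L by (simp add: algebra_simps)
qed

lemma G2_mult_eq:
  "G2_mult n1 n2 m k1 k2 (i,j,k) (i',j',k') =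
   ((i+i') mod int m, (j * k2 ^ nat i' + j') mod int n2, (k * k1 ^ nat i' + k') mod int n1)"
  by (simp add: G2_mult_def)

lemma G2_mult_assoc:
  assumes c1: "[k1 ^ m = 1] (mod int n1)" and c2: "[k2 ^ m = 1] (mod int n2)"
    and "0 \<le> i'" "0 \<le> i''"
  shows "G2_mult n1 n2 m k1 k2 (G2_mult n1 n2 m k1 k2 (i,j,k) (i',j',k')) (i'',j'',k'')
       = G2_mult n1 n2 m k1 k2 (i,j,k) (G2_mult n1 n2 m k1 k2 (i',j',k') (i'',j'',k''))"
proof -
  have c1': "((i + i') mod int m + i'') mod int m = (i + (i' + i'') mod int m) mod int m"
    by (simp add: mod_add_left_eq mod_add_right_eq add.assoc)
  show ?thesis
    unfolding G2_mult_eq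
    unfolding c1' G2_assoc_comp[OF c2 assms(3,4)] G2_assoc_comp[OF c1 assms(3,4)]
    by (rule refl)
qed

lemma G2_group:
  assumes "n1 \<ge> 1" "n2 \<ge> 1" "m \<ge> 1"
    and c1: "[k1 ^ m = 1] (mod int n1)" and c2: "[k2 ^ m = 1] (mod int n2)"
  shows "group (G2 n1 n2 m k1 k2)"
proof (rule groupI)
  fix x y z assume x: "x \<in> carrier (G2 n1 n2 m k1 k2)" and y: "y \<in> carrier (G2 n1 n2 m k1 k2)"
    and z: "z \<in> carrier (G2 n1 n2 m k1 k2)"
  obtain i j k where xe: "x = (i,j,k)" by (cases x) auto
  obtain i' j' k' where ye: "y = (i',j',k')" by (cases y) auto
  obtain i'' j'' k'' where ze: "z = (i'',j'',k'')" by (cases z) auto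
  have ir: "0 \<le> i'" "0 \<le> i''" using y z by (auto simp: ye ze G2_def G2_carrier_def)
  show "x \<otimes>\<^bsub>G2 n1 n2 m k1 k2\<^esub> y \<otimes>\<^bsub>G2 n1 n2 m k1 k2\<^esub> z =
        x \<otimes>\<^bsub>G2 n1 n2 m k1 k2\<^esub> (y \<otimes>\<^bsub>G2 n1 n2 m k1 k2\<^esub> z)"
    unfolding xe ye ze G2_def monoid.simps using G2_mult_assoc[OF c1 c2 ir] by simp
next
  fix x y assume x: "x \<in> carrier (G2 n1 n2 m k1 k2)" and y: "y \<in> carrier (G2 n1 n2 m k1 k2)"
  obtain i j k where xe: "x = (i,j,k)" by (cases x) auto
  obtain i' j' k' where ye: "y = (i',j',k')" by (cases y) auto
  show "x \<otimes>\<^bsub>G2 n1 n2 m k1 k2\<^esub> y \<in> carrier (G2 n1 n2 m k1 k2)"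
    using assms(1-3) unfolding xe ye G2_def monoid.simps G2_mult_eq G2_carrier_def by simp
next
  show "\<one>\<^bsub>G2 n1 n2 m k1 k2\<^esub> \<in> carrier (G2 n1 n2 m k1 k2)"
    using assms(1-3) by (simp add: G2_def G2_carrier_def)
next
  fix x assume x: "x \<in> carrier (G2 n1 n2 m k1 k2)"
  obtain i j k where xe: "x = (i,j,k)" by (cases x) auto
  have ir: "0 \<le> i" "i < int m" "0 \<le> j" "j < int n2" "0 \<le> k" "k < int n1"
    using x by (auto simp: xe G2_def G2_carrier_def)
  then show "\<one>\<^bsub>G2 n1 n2 m k1 k2\<^esub> \<otimes>\<^bsub>G2 n1 n2 m k1 k2\<^esub> x = x"
    unfolding xe G2_def monoid.simps G2_mult_eq by simp
next
  fix x assume x: "x \<in> carrier (G2 n1 n2 m k1 k2)"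
  obtain i j k where xe: "x = (i,j,k)" by (cases x) auto
  have ir: "0 \<le> i" "i < int m" "0 \<le> j" "j < int n2" "0 \<le> k" "k < int n1"
    using x by (auto simp: xe G2_def G2_carrier_def)
  define y where "y = ((int m - i) mod int m, (- j * k2 ^ (m - nat i)) mod int n2,
                       (- k * k1 ^ (m - nat i)) mod int n1)"
  have p1: "k1 ^ (m - nat i) * k1 ^ nat i = k1 ^ m" "k2 ^ (m - nat i) * k2 ^ nat i = k2 ^ m"
    using ir by (simp_all flip: power_add)
  have a1: "((- k * k1 ^ (m - nat i)) mod int n1 * k1 ^ nat i + k) mod int n1 = 0"
  proof -
    have "((- k * k1 ^ (m - nat i)) mod int n1 * k1 ^ nat i + k) mod int n1
        = ((- k * k1 ^ (m - nat i)) * k1 ^ nat i + k) mod int n1"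
      by (metis mod_add_left_eq mod_mult_left_eq)
    also have "\<dots> = (- k * k1 ^ m + k) mod int n1" by (simp add: p1(1)[symmetric] mult.assoc)
    also have "\<dots> = (- k * 1 + k) mod int n1" using c1 unfolding cong_def by (rule modK)
    finally show ?thesis by simp
  qed
  have a2: "((- j * k2 ^ (m - nat i)) mod int n2 * k2 ^ nat i + j) mod int n2 = 0"
  proof -
    have "((- j * k2 ^ (m - nat i)) mod int n2 * k2 ^ nat i + j) mod int n2
        = ((- j * k2 ^ (m - nat i)) * k2 ^ nat i + j) mod int n2"
      by (metis mod_add_left_eq mod_mult_left_eq)
    also have "\<dots> = (- j * k2 ^ m + j) mod int n2" by (simp add: p1(2)[symmetric] mult.assoc)
    also have "\<dots> = (- j * 1 + j) mod int n2" using c2 unfolding cong_def by (rule modK)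
    finally show ?thesis by simp
  qed
  have a0: "((int m - i) mod int m + i) mod int m = 0"
    by (simp add: mod_add_left_eq)
  have "y \<in> carrier (G2 n1 n2 m k1 k2)"
    using assms(1-3) by (simp add: y_def G2_def G2_carrier_def)
  moreover have "y \<otimes>\<^bsub>G2 n1 n2 m k1 k2\<^esub> x = \<one>\<^bsub>G2 n1 n2 m k1 k2\<^esub>"
    unfolding y_def xe G2_def monoid.simps G2_mult_eq a0 a1 a2 by (rule refl)
  ultimately show "\<exists>y\<in>carrier (G2 n1 n2 m k1 k2). y \<otimes>\<^bsub>G2 n1 n2 m k1 k2\<^esub> x = \<one>\<^bsub>G2 n1 n2 m k1 k2\<^esub>"
    by blast
qed

lemma code_perm:
  fixes G (structure)
  assumes G: "group G" and gb: "bij_betw g {..<N} (carrier G)" and u: "u \<in> carrier G"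
    and sig: "\<And>c. c < N \<Longrightarrow> \<sigma> c < N \<and> g (\<sigma> c) = u \<otimes>\<^bsub>G\<^esub> g c"
    and b: "b \<in> code G g N \<alpha>"
  shows "map (\<lambda>c. b ! \<sigma> c) [0..<N] \<in> code G g N \<alpha>"
proof -
  interpret group G by fact
  obtain lam where bdef: "b = map (\<lambda>c. \<Sum>r<N. lam r * grm G g \<alpha> r c) [0..<N]"
    using b unfolding code_def by blast
  define gi where "gi = the_inv_into {..<N} g"
  have inj: "inj_on g {..<N}" using gb by (simp add: bij_betw_def)
  have gi: "gi x < N \<and> g (gi x) = x" if "x \<in> carrier G" for x
    using that gb unfolding gi_def
    by (metis bij_betw_def f_the_inv_into_f_bij_betw lessThan_iff the_inv_into_into subset_refl)
  have gig: "gi (g r) = r" if "r < N" for r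
    using that inj unfolding gi_def by (simp add: the_inv_into_f_f)
  have gc: "g r \<in> carrier G" if "r < N" for r
    using that gb by (auto simp: bij_betw_def)
  define h where "h r = gi (u \<otimes> g r)" for r
  define h' where "h' r = gi (inv u \<otimes> g r)" for r
  have hN: "h r < N \<and> g (h r) = u \<otimes> g r" if "r < N" for r
    unfolding h_def using gi gc u that by simp
  have h'N: "h' r < N \<and> g (h' r) = inv u \<otimes> g r" if "r < N" for r
    unfolding h'_def using gi gc u that by simp
  have hb: "bij_betw h {..<N} {..<N}"
  proof (rule bij_betw_byWitness[where f'=h'])
    show "\<forall>a\<in>{..<N}. h' (h a) = a"
    proof
      fix a assume a: "a \<in> {..<N}"
      have "h' (h a) = gi (inv u \<otimes> (u \<otimes> g a))" unfolding h'_def using hN a by simp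
      also have "\<dots> = gi (g a)" using u gc a by (simp add: m_assoc[symmetric])
      finally show "h' (h a) = a" using gig a by simp
    qed
    show "\<forall>a\<in>{..<N}. h (h' a) = a"
    proof
      fix a assume a: "a \<in> {..<N}"
      have "h (h' a) = gi (u \<otimes> (inv u \<otimes> g a))" unfolding h_def using h'N a by simp
      also have "\<dots> = gi (g a)" using u gc a by (simp add: m_assoc[symmetric])
      finally show "h (h' a) = a" using gig a by simp
    qed
    show "h ` {..<N} \<subseteq> {..<N}" using hN by auto
    show "h' ` {..<N} \<subseteq> {..<N}" using h'N by auto
  qed
  have key: "inv (g (h r)) \<otimes> (u \<otimes> g c) = inv (g r) \<otimes> g c" if "r < N" "c < N" for r c
  proof -
    have "inv (g (h r)) = inv (g r) \<otimes> inv u" using hN[OF that(1)] gc[OF that(1)] u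
      by (simp add: inv_mult_group)
    then have "inv (g (h r)) \<otimes> (u \<otimes> g c) = (inv (g r) \<otimes> inv u) \<otimes> (u \<otimes> g c)" by simp
    also have "\<dots> = inv (g r) \<otimes> (inv u \<otimes> (u \<otimes> g c))"
      using gc that u by (simp add: m_assoc)
    also have "inv u \<otimes> (u \<otimes> g c) = g c" using gc that u by (simp add: m_assoc[symmetric])
    finally show ?thesis .
  qed
  have "map (\<lambda>c. b ! \<sigma> c) [0..<N] = map (\<lambda>c. \<Sum>r<N. (lam \<circ> h) r * grm G g \<alpha> r c) [0..<N]"
  proof (rule map_cong[OF refl])
    fix c assume "c \<in> set [0..<N]"
    then have c: "c < N" by simp
    have "b ! \<sigma> c = (\<Sum>r<N. lam r * \<alpha> (inv (g r) \<otimes> (u \<otimes> g c)))"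
      using sig[OF c] unfolding bdef grm_def by simp
    also have "\<dots> = (\<Sum>r<N. lam (h r) * \<alpha> (inv (g (h r)) \<otimes> (u \<otimes> g c)))"
      by (rule sum.reindex_bij_betw[OF hb, symmetric])
    also have "\<dots> = (\<Sum>r<N. (lam \<circ> h) r * grm G g \<alpha> r c)"
      unfolding grm_def using key c by (intro sum.cong) auto
    finally show "b ! \<sigma> c = (\<Sum>r<N. (lam \<circ> h) r * grm G g \<alpha> r c)" .
  qed
  then show ?thesis unfolding code_def by blast
qed

lemma length_concat_const:
  "(\<forall>x\<in>set xs. length x = L) \<Longrightarrow> length (concat xs) = length xs * L"
  by (induction xs) auto

lemma nth_concat_const:
  "(\<forall>x\<in>set xs. length x = L) \<Longrightarrow> p < length xs * L \<Longrightarrow>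
   concat xs ! p = xs ! (p div L) ! (p mod L)"
proof (induction xs arbitrary: p)
  case Nil then show ?case by simp
next
  case (Cons x xs)
  have lx: "length x = L" using Cons.prems by simp
  show ?case
  proof (cases "p < L")
    case True then show ?thesis using lx by (simp add: nth_append)
  next
    case False
    then have L0: "L > 0" using Cons.prems by (cases L) auto
    have "concat (x # xs) ! p = concat xs ! (p - L)" using False lx by (simp add: nth_append)
    also have "\<dots> = xs ! ((p - L) div L) ! ((p - L) mod L)"
      using Cons False by (intro Cons.IH) auto
    also have "(p - L) mod L = p mod L" using False L0 by (simp add: le_mod_geq)
    also have "xs ! ((p - L) div L) = (x # xs) ! Suc ((p - L) div L)" by simp
    also have "Suc ((p - L) div L) = p div L" using False L0 by (simp add: le_div_geq)
    finally show ?thesis .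
  qed
qed

lemma T_rotate: "T xs = rotate (length xs - 1) xs"
proof (cases "xs = []")
  case True then show ?thesis by (simp add: T_def)
next
  case False
  have "rotate1 (T xs) = xs" using False by (simp add: T_def)
  then have "rotate (length xs - 1) xs = rotate (length xs - 1) (rotate1 (T xs))" by simp
  also have "\<dots> = rotate (Suc (length xs - 1)) (T xs)" by (simp add: rotate1_rotate_swap)
  also have "\<dots> = rotate (length xs) (T xs)" using False by simp
  also have "\<dots> = T xs"
  proof -
    have "length (T xs) = length xs" using False by (simp add: T_def)
    then show ?thesis by simp
  qed
  finally show ?thesis by simp
qed

lemma length_T[simp]: "length (T xs) = length xs"
  by (simp add: T_rotate)

lemma Tpow_rotate: "Tpow s xs = rotate (s * (length xs - 1)) xs"
proof (induction s)
  case 0 then show ?case by (simp add: Tpow_def)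
next
  case (Suc s)
  have "Tpow (Suc s) xs = T (Tpow s xs)" by (simp add: Tpow_def)
  also have "\<dots> = rotate (length xs - 1) (rotate (s * (length xs - 1)) xs)"
    by (simp add: Suc T_rotate)
  also have "\<dots> = rotate (Suc s * (length xs - 1)) xs" by (simp add: rotate_rotate)
  finally show ?case .
qed

lemma Tpow_nth: "k < length xs \<Longrightarrow> Tpow s xs ! k = xs ! ((s * (length xs - 1) + k) mod length xs)"
  by (simp add: Tpow_rotate nth_rotate)

lemma length_Tpow[simp]: "length (Tpow s xs) = length xs"
  by (simp add: Tpow_rotate)

lemma posmod_mod: assumes "n \<ge> 1" shows "int (posmod a n) mod int n = a mod int n"
proof -
  have "\<exists>a'. a' > 0 \<and> [a = int a'] (mod int n)"
  proof (intro exI conjI)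
    show "nat (a mod int n) + n > 0" using assms by simp
    show "[a = int (nat (a mod int n) + n)] (mod int n)"
      using assms by (simp add: cong_def mod_add_right_eq)
  qed
  then have "posmod a n > 0 \<and> [a = int (posmod a n)] (mod int n)"
    unfolding posmod_def by (rule LeastI_ex)
  then show ?thesis by (simp add: cong_def)
qed

lemma idx_facts:
  fixes i j k n1 n2 :: nat
  assumes "j < n2" "k < n1"
  shows "j * n1 + k < n1 * n2"
    and "(i * (n1 * n2) + j * n1 + k) div (n1 * n2) = i"
    and "(i * (n1 * n2) + j * n1 + k) mod (n1 * n2) = j * n1 + k"
    and "(j * n1 + k) div n1 = j"
    and "(j * n1 + k) mod n1 = k"
    and "(i * (n1 * n2) + j * n1 + k) div n1 = i * n2 + j"
    and "(i * (n1 * n2) + j * n1 + k) mod n1 = k"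
proof -
  have "(j + 1) * n1 \<le> n2 * n1" using assms(1) by (intro mult_le_mono1) simp
  then show lt: "j * n1 + k < n1 * n2" using assms(2) by (simp add: algebra_simps)
  then have pos0: "n1 * n2 > 0" by (rule le_less_trans[OF le0])
  then have pos: "n1 > 0" "n2 > 0" by auto
  have e: "i * (n1 * n2) + j * n1 + k = i * (n1 * n2) + (j * n1 + k)" by simp
  show "(i * (n1 * n2) + j * n1 + k) div (n1 * n2) = i"
    unfolding e using lt pos pos0 by simp
  show "(i * (n1 * n2) + j * n1 + k) mod (n1 * n2) = j * n1 + k"
    unfolding e using lt pos pos0 by simp
  show "(j * n1 + k) div n1 = j" using assms by simp
  show "(j * n1 + k) mod n1 = k" using assms by simp
  have e2: "i * (n1 * n2) + j * n1 + k = (i * n2 + j) * n1 + k" by (simp add: algebra_simps)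
  show "(i * (n1 * n2) + j * n1 + k) div n1 = i * n2 + j" unfolding e2 using assms by simp
  show "(i * (n1 * n2) + j * n1 + k) mod n1 = k" unfolding e2 using assms by simp
qed

lemma idx_bound:
  fixes i j k n1 n2 m :: nat
  assumes "i < m" "j < n2" "k < n1"
  shows "i * (n1 * n2) + j * n1 + k < n1 * n2 * m"
proof -
  have "j * n1 + k < n1 * n2" using idx_facts(1)[OF assms(2,3)] .
  moreover have "(i + 1) * (n1 * n2) \<le> m * (n1 * n2)" using assms(1) by (intro mult_le_mono1) simp
  ultimately show ?thesis by (simp add: algebra_simps)
qed

lemma G2_elem_idx:
  assumes "j < n2" "k < n1"
  shows "G2_elem n1 n2 (i * (n1 * n2) + j * n1 + k) = (int i, int j, int k)"
  unfolding G2_elem_def using idx_facts(2,6,7)[OF assms, where i=i] assms by simp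

lemma decomp:
  fixes p n1 n2 m :: nat
  assumes "p < n1 * n2 * m"
  shows "\<exists>i j k. i < m \<and> j < n2 \<and> k < n1 \<and> p = i * (n1 * n2) + j * n1 + k"
proof (intro exI conjI)
  have "n1 * n2 * m \<noteq> 0" using assms by linarith
  then have pos: "n1 > 0" "n2 > 0" by auto
  show "p div (n1 * n2) < m" using assms by (simp add: less_mult_imp_div_less mult.commute)
  show "p div n1 mod n2 < n2" using pos by simp
  show "p mod n1 < n1" using pos by simp
  have "p = p div (n1 * n2) * (n1 * n2) + p mod (n1 * n2)" by (rule div_mult_mod_eq[symmetric])
  also have "p mod (n1 * n2) = n1 * (p div n1 mod n2) + p mod n1" by (rule mod_mult2_eq)
  finally show "p = p div (n1 * n2) * (n1 * n2) + p div n1 mod n2 * n1 + p mod n1"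
    by (simp add: algebra_simps)
qed

lemma G2_elem_bij:
  assumes "n1 \<ge> 1" "n2 \<ge> 1"
  shows "bij_betw (G2_elem n1 n2) {..<n1 * n2 * m} (carrier (G2 n1 n2 m k1 k2))"
  unfolding bij_betw_def
proof (intro conjI)
  show "inj_on (G2_elem n1 n2) {..<n1 * n2 * m}"
  proof (rule inj_onI)
    fix p p' assume p: "p \<in> {..<n1 * n2 * m}" and p': "p' \<in> {..<n1 * n2 * m}"
      and e: "G2_elem n1 n2 p = G2_elem n1 n2 p'"
    obtain i j k where ijk: "i < m" "j < n2" "k < n1" "p = i * (n1 * n2) + j * n1 + k"
      using decomp p by blast
    obtain i' j' k' where ijk': "i' < m" "j' < n2" "k' < n1" "p' = i' * (n1 * n2) + j' * n1 + k'"
      using decomp p' by blast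
    show "p = p'" using e unfolding ijk(4) ijk'(4) G2_elem_idx[OF ijk(2,3)] G2_elem_idx[OF ijk'(2,3)]
      by simp
  qed
  show "G2_elem n1 n2 ` {..<n1 * n2 * m} = carrier (G2 n1 n2 m k1 k2)"
  proof
    show "G2_elem n1 n2 ` {..<n1 * n2 * m} \<subseteq> carrier (G2 n1 n2 m k1 k2)"
    proof
      fix x assume "x \<in> G2_elem n1 n2 ` {..<n1 * n2 * m}"
      then obtain p where p: "p < n1 * n2 * m" and x: "x = G2_elem n1 n2 p" by auto
      obtain i j k where ijk: "i < m" "j < n2" "k < n1" "p = i * (n1 * n2) + j * n1 + k"
        using decomp p by blast
      show "x \<in> carrier (G2 n1 n2 m k1 k2)"
        unfolding x ijk(4) G2_elem_idx[OF ijk(2,3)] using ijk by (simp add: G2_def G2_carrier_def)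
    qed
    show "carrier (G2 n1 n2 m k1 k2) \<subseteq> G2_elem n1 n2 ` {..<n1 * n2 * m}"
    proof
      fix x assume x: "x \<in> carrier (G2 n1 n2 m k1 k2)"
      obtain i j k where xe: "x = (i, j, k)" by (cases x) auto
      have ir: "0 \<le> i" "i < int m" "0 \<le> j" "j < int n2" "0 \<le> k" "k < int n1"
        using x by (auto simp: xe G2_def G2_carrier_def)
      have b: "nat j < n2" "nat k < n1" "nat i < m" using ir by auto
      have "x = G2_elem n1 n2 (nat i * (n1 * n2) + nat j * n1 + nat k)"
        unfolding G2_elem_idx[OF b(1,2)] xe using ir by simp
      moreover have "nat i * (n1 * n2) + nat j * n1 + nat k < n1 * n2 * m"
        using idx_bound[OF b(3,1,2)] .
      ultimately show "x \<in> G2_elem n1 n2 ` {..<n1 * n2 * m}" by blast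
    qed
  qed
qed

lemma transform:
  fixes alpha :: "int \<times> int \<times> int \<Rightarrow> 'a::field"
  assumes n: "n1 \<ge> 1" "n2 \<ge> 1" "m \<ge> 1"
    and c1: "[k1 ^ m = 1] (mod int n1)" and c2: "[k2 ^ m = 1] (mod int n2)"
    and b: "b \<in> code (G2 n1 n2 m k1 k2) (G2_elem n1 n2) (n1 * n2 * m) alpha"
    and u: "u \<in> carrier (G2 n1 n2 m k1 k2)"
    and len: "length L = n1 * n2 * m"
    and H: "\<And>i j k. i < m \<Longrightarrow> j < n2 \<Longrightarrow> k < n1 \<Longrightarrow> \<exists>i' j' k'. i' < m \<and> j' < n2 \<and> k' < n1 \<and>
            L ! (i * (n1 * n2) + j * n1 + k) = b ! (i' * (n1 * n2) + j' * n1 + k') \<and>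
            (int i', int j', int k') = u \<otimes>\<^bsub>G2 n1 n2 m k1 k2\<^esub> (int i, int j, int k)"
  shows "L \<in> code (G2 n1 n2 m k1 k2) (G2_elem n1 n2) (n1 * n2 * m) alpha"
proof -
  let ?G = "G2 n1 n2 m k1 k2"
  let ?N = "n1 * n2 * m"
  let ?P = "\<lambda>p q. q < ?N \<and> L ! p = b ! q \<and> G2_elem n1 n2 q = u \<otimes>\<^bsub>?G\<^esub> G2_elem n1 n2 p"
  define \<sigma> where "\<sigma> p = (SOME q. ?P p q)" for p
  have sP: "?P p (\<sigma> p)" if p: "p < ?N" for p
  proof -
    obtain i j k where ijk: "i < m" "j < n2" "k < n1" "p = i * (n1 * n2) + j * n1 + k"
      using decomp p by blast
    obtain i' j' k' where ijk': "i' < m" "j' < n2" "k' < n1"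
      "L ! (i * (n1 * n2) + j * n1 + k) = b ! (i' * (n1 * n2) + j' * n1 + k')"
      "(int i', int j', int k') = u \<otimes>\<^bsub>?G\<^esub> (int i, int j, int k)"
      using H[OF ijk(1-3)] by blast
    have "?P p (i' * (n1 * n2) + j' * n1 + k')"
      using idx_bound[OF ijk'(1-3)] ijk'(4,5) G2_elem_idx[OF ijk'(2,3)] G2_elem_idx[OF ijk(2,3)]
      unfolding ijk(4) by simp
    then show ?thesis unfolding \<sigma>_def by (rule someI)
  qed
  have "L = map (\<lambda>c. b ! \<sigma> c) [0..<?N]"
    by (rule nth_equalityI) (use len sP in auto)
  moreover have "map (\<lambda>c. b ! \<sigma> c) [0..<?N] \<in> code ?G (G2_elem n1 n2) ?N alpha"
    by (rule code_perm[OF G2_group[OF n c1 c2] G2_elem_bij[OF n(1,2)] u _ b]) (use sP in auto)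
  ultimately show ?thesis by simp
qed

theorem theorem3p2:
  fixes n1 n2 m :: nat and k1 k2 :: int
    and alpha :: "int \<times> int \<times> int \<Rightarrow> 'a::{field, finite}"
    and b :: "'a list"
  assumes "n1 \<ge> 1" and "n2 \<ge> 1" and "m \<ge> 1"
    and "[k1 ^ m = 1] (mod int n1)" and "[k2 ^ m = 1] (mod int n2)"
    and "\<forall>t. 1 \<le> t \<and> t \<le> m - 1 \<longrightarrow> \<not> [k1 ^ t = 1] (mod int n1)"
    and "\<forall>t. 1 \<le> t \<and> t \<le> m - 1 \<longrightarrow> \<not> [k2 ^ t = 1] (mod int n2)"
    and "b \<in> code (G2 n1 n2 m k1 k2) (G2_elem n1 n2) (n1 * n2 * m) alpha"
  shows
    "let
       bp = (\<lambda>i j. take n1 (drop (i * n1 * n2 + j * n1) b));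
       bb = (\<lambda>i j. Tpow (posmod (k1 ^ i) n1) (bp i j));
       bt = (\<lambda>i. concat (map (bb i) [0..<n2]));
       btp = (\<lambda>i. concat (Tpow (posmod (k2 ^ i) n2) (map (bp i) [0..<n2])));
       btpp = (\<lambda>i. take (n1 * n2) (drop (n1 * n2 * i) b));
       C = code (G2 n1 n2 m k1 k2) (G2_elem n1 n2) (n1 * n2 * m) alpha
     in concat (map bt [0..<m]) \<in> C
      \<and> concat (map btp [0..<m]) \<in> C
      \<and> concat (T (map btpp [0..<m])) \<in> C"
proof -
  note n = assms(1,2,3) and c1 = assms(4) and c2 = assms(5) and bC = assms(8)
  let ?G = "G2 n1 n2 m k1 k2"
  let ?C = "code (G2 n1 n2 m k1 k2) (G2_elem n1 n2) (n1 * n2 * m) alpha"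
  have lenb: "length b = n1 * n2 * m" using bC unfolding code_def by auto
  define bp where "bp = (\<lambda>i j. take n1 (drop (i * n1 * n2 + j * n1) b))"
  define bb where "bb = (\<lambda>i j. Tpow (posmod (k1 ^ i) n1) (bp i j))"
  define bt where "bt = (\<lambda>i. concat (map (bb i) [0..<n2]))"
  define btp where "btp = (\<lambda>i. concat (Tpow (posmod (k2 ^ i) n2) (map (bp i) [0..<n2])))"
  define btpp where "btpp = (\<lambda>i. take (n1 * n2) (drop (n1 * n2 * i) b))"
  have bnd: "i * (n1 * n2) + j * n1 + n1 \<le> n1 * n2 * m" if "i < m" "j < n2" for i j
  proof -
    have "i * (n1 * n2) + j * n1 + (n1 - 1) < n1 * n2 * m"
      by (rule idx_bound[OF that]) (use n in simp)
    then show ?thesis using n by simp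
  qed
  have bp_len: "length (bp i j) = n1" if "i < m" "j < n2" for i j
    using bnd[OF that] lenb unfolding bp_def by (simp add: algebra_simps)
  have bp_nth: "bp i j ! k = b ! (i * (n1 * n2) + j * n1 + k)" if "i < m" "j < n2" "k < n1" for i j k
    using bnd[OF that(1,2)] lenb that(3) unfolding bp_def by (simp add: algebra_simps)
  have bb_len: "length (bb i j) = n1" if "i < m" "j < n2" for i j
    using bp_len[OF that] unfolding bb_def by simp
  have bt_len: "length (bt i) = n1 * n2" if "i < m" for i
    unfolding bt_def using bb_len[OF that] by (subst length_concat_const[where L = n1]) auto
  have btp_len: "length (btp i) = n1 * n2" if "i < m" for i
  proof -
    have "\<forall>x\<in>set (Tpow (posmod (k2 ^ i) n2) (map (bp i) [0..<n2])). length x = n1"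
      using bp_len[OF that] by (auto simp: Tpow_rotate)
    then show ?thesis unfolding btp_def by (subst length_concat_const[where L = n1]) auto
  qed
  have btpp_len: "length (btpp i) = n1 * n2" if "i < m" for i
  proof -
    have "n1 * n2 * i + n1 * n2 \<le> n1 * n2 * m" using that
      by (metis add.commute mult_Suc_right mult_le_mono2 Suc_leI)
    then show ?thesis using lenb unfolding btpp_def by simp
  qed
  have A1: "concat (map bt [0..<m]) \<in> ?C"
  proof (rule transform[OF n c1 c2 bC, where u = "(0, 0, int n1 - 1)"])
    show "(0, 0, int n1 - 1) \<in> carrier ?G" using n by (simp add: G2_def G2_carrier_def)
    show "length (concat (map bt [0..<m])) = n1 * n2 * m"
      using bt_len by (subst length_concat_const[where L = "n1 * n2"]) auto
    fix i j k assume ijk: "i < m" "j < n2" "k < n1"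
    define s where "s = posmod (k1 ^ i) n1"
    define k' where "k' = (s * (n1 - 1) + k) mod n1"
    have k'lt: "k' < n1" using n unfolding k'_def by simp
    have "concat (map bt [0..<m]) ! (i * (n1 * n2) + j * n1 + k)
        = bt i ! (j * n1 + k)"
      using bt_len ijk idx_bound[OF ijk] idx_facts(1,4,5)[OF ijk(2,3)] idx_facts(2,3,6,7)[OF ijk(2,3), where i = i]
      by (subst nth_concat_const[where L = "n1 * n2"]) (auto simp: algebra_simps)
    also have "\<dots> = bb i j ! k"
      unfolding bt_def using bb_len ijk idx_facts(1,4,5)[OF ijk(2,3)] idx_facts(2,3,6,7)[OF ijk(2,3), where i = i]
      by (subst nth_concat_const[where L = "n1"]) (auto simp: algebra_simps)
    also have "\<dots> = bp i j ! k'"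
      unfolding bb_def k'_def s_def using ijk bp_len by (simp add: Tpow_nth)
    also have "\<dots> = b ! (i * (n1 * n2) + j * n1 + k')" using bp_nth ijk k'lt by simp
    finally have e1: "concat (map bt [0..<m]) ! (i * (n1 * n2) + j * n1 + k) = b ! (i * (n1 * n2) + j * n1 + k')" .
    have "int k' = (int s * (int n1 - 1) + int k) mod int n1"
      unfolding k'_def using n by (simp add: zmod_int of_nat_diff)
    also have "\<dots> = ((int n1 - 1) * int s + int k) mod int n1" by (simp add: mult.commute)
    also have "\<dots> = ((int n1 - 1) * k1 ^ i + int k) mod int n1"
      by (rule modK) (use posmod_mod[OF n(1)] s_def in simp)
    finally have e2: "int k' = ((int n1 - 1) * k1 ^ i + int k) mod int n1" .
    have "(int i, int j, int k') = (0, 0, int n1 - 1) \<otimes>\<^bsub>?G\<^esub> (int i, int j, int k)"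
      unfolding G2_def monoid.simps G2_mult_eq using e2 ijk by simp
    then show "\<exists>i' j' k'. i' < m \<and> j' < n2 \<and> k' < n1 \<and>
            concat (map bt [0..<m]) ! (i * (n1 * n2) + j * n1 + k) = b ! (i' * (n1 * n2) + j' * n1 + k') \<and>
            (int i', int j', int k') = (0, 0, int n1 - 1) \<otimes>\<^bsub>?G\<^esub> (int i, int j, int k)"
      using e1 ijk k'lt by blast
  qed
  have A2: "concat (map btp [0..<m]) \<in> ?C"
  proof (rule transform[OF n c1 c2 bC, where u = "(0, int n2 - 1, 0)"])
    show "(0, int n2 - 1, 0) \<in> carrier ?G" using n by (simp add: G2_def G2_carrier_def)
    show "length (concat (map btp [0..<m])) = n1 * n2 * m"
      using btp_len by (subst length_concat_const[where L = "n1 * n2"]) auto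
    fix i j k assume ijk: "i < m" "j < n2" "k < n1"
    define s where "s = posmod (k2 ^ i) n2"
    define j' where "j' = (s * (n2 - 1) + j) mod n2"
    have j'lt: "j' < n2" using n unfolding j'_def by simp
    have "concat (map btp [0..<m]) ! (i * (n1 * n2) + j * n1 + k)
        = btp i ! (j * n1 + k)"
      using btp_len ijk idx_bound[OF ijk] idx_facts(1,4,5)[OF ijk(2,3)] idx_facts(2,3,6,7)[OF ijk(2,3), where i = i]
      by (subst nth_concat_const[where L = "n1 * n2"]) (auto simp: algebra_simps)
    also have "\<dots> = Tpow s (map (bp i) [0..<n2]) ! j ! k"
      unfolding btp_def s_def using bp_len ijk idx_facts(1,4,5)[OF ijk(2,3)] idx_facts(2,3,6,7)[OF ijk(2,3), where i = i]
      by (subst nth_concat_const[where L = "n1"]) (auto simp: algebra_simps Tpow_rotate)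
    also have "\<dots> = bp i j' ! k"
      unfolding j'_def using ijk by (simp add: Tpow_nth)
    also have "\<dots> = b ! (i * (n1 * n2) + j' * n1 + k)" using bp_nth ijk j'lt by simp
    finally have e1: "concat (map btp [0..<m]) ! (i * (n1 * n2) + j * n1 + k) = b ! (i * (n1 * n2) + j' * n1 + k)" .
    have "int j' = (int s * (int n2 - 1) + int j) mod int n2"
      unfolding j'_def using n by (simp add: zmod_int of_nat_diff)
    also have "\<dots> = ((int n2 - 1) * int s + int j) mod int n2" by (simp add: mult.commute)
    also have "\<dots> = ((int n2 - 1) * k2 ^ i + int j) mod int n2"
      by (rule modK) (use posmod_mod[OF n(2)] s_def in simp)
    finally have e2: "int j' = ((int n2 - 1) * k2 ^ i + int j) mod int n2" .
    have "(int i, int j', int k) = (0, int n2 - 1, 0) \<otimes>\<^bsub>?G\<^esub> (int i, int j, int k)"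
      unfolding G2_def monoid.simps G2_mult_eq using e2 ijk by simp
    then show "\<exists>i' j' k'. i' < m \<and> j' < n2 \<and> k' < n1 \<and>
            concat (map btp [0..<m]) ! (i * (n1 * n2) + j * n1 + k) = b ! (i' * (n1 * n2) + j' * n1 + k') \<and>
            (int i', int j', int k') = (0, int n2 - 1, 0) \<otimes>\<^bsub>?G\<^esub> (int i, int j, int k)"
      using e1 ijk j'lt by blast
  qed
  have A3: "concat (T (map btpp [0..<m])) \<in> ?C"
  proof (rule transform[OF n c1 c2 bC, where u = "(int m - 1, 0, 0)"])
    show "(int m - 1, 0, 0) \<in> carrier ?G" using n by (simp add: G2_def G2_carrier_def)
    show "length (concat (T (map btpp [0..<m]))) = n1 * n2 * m"
      using btpp_len by (subst length_concat_const[where L = "n1 * n2"]) (auto simp: T_rotate)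
    fix i j k assume ijk: "i < m" "j < n2" "k < n1"
    define i' where "i' = (m - 1 + i) mod m"
    have i'lt: "i' < m" using n unfolding i'_def by simp
    have "concat (T (map btpp [0..<m])) ! (i * (n1 * n2) + j * n1 + k)
        = T (map btpp [0..<m]) ! i ! (j * n1 + k)"
      using btpp_len ijk idx_bound[OF ijk] idx_facts(1,4,5)[OF ijk(2,3)] idx_facts(2,3,6,7)[OF ijk(2,3), where i = i]
      by (subst nth_concat_const[where L = "n1 * n2"]) (auto simp: algebra_simps T_rotate)
    also have "\<dots> = btpp i' ! (j * n1 + k)"
      unfolding i'_def using ijk by (simp add: T_rotate nth_rotate add.commute)
    also have "\<dots> = b ! (i' * (n1 * n2) + j * n1 + k)"
      using btpp_len[OF i'lt] idx_facts(1)[OF ijk(2,3)] unfolding btpp_def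
      by (simp add: algebra_simps)
    finally have e1: "concat (T (map btpp [0..<m])) ! (i * (n1 * n2) + j * n1 + k) = b ! (i' * (n1 * n2) + j * n1 + k)" .
    have ee: "int (m - 1 + i) = int m - 1 + int i" using n by simp
    have e2: "int i' = (int m - 1 + int i) mod int m"
      unfolding i'_def zmod_int ee by (rule refl)
    have "(int i', int j, int k) = (int m - 1, 0, 0) \<otimes>\<^bsub>?G\<^esub> (int i, int j, int k)"
      unfolding G2_def monoid.simps G2_mult_eq using e2 ijk by simp
    then show "\<exists>i' j' k'. i' < m \<and> j' < n2 \<and> k' < n1 \<and>
            concat (T (map btpp [0..<m])) ! (i * (n1 * n2) + j * n1 + k) = b ! (i' * (n1 * n2) + j' * n1 + k') \<and>
            (int i', int j', int k') = (int m - 1, 0, 0) \<otimes>\<^bsub>?G\<^esub> (int i, int j, int k)"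
      using e1 ijk i'lt by blast
  qed
  show ?thesis using A1 A2 A3 unfolding Let_def bt_def bb_def btp_def btpp_def bp_def by blast
qed

end
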